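(* Let $\Sigma$ be a finite alphabet, let $m = m_1 m_2 \cdots m_n \in \Sigma^n$ be a message with $n \ge 2$, and let $\alpha,\beta,\gamma \in \Sigma$ be pairwise distinct symbols. Let $m' = GCT(\alpha\beta\leftrightarrow\alpha\gamma, m)$ be the generalized context transformation of $m$ (defined in the context below). Let $p_0$ and $p_1$ be the empirical symbol distributions of $m$ and $m'$, respectively. Put $p_{0,\max} = \max\{p_0(\beta), p_0(\gamma)\}$ and $p_{1,\max} = \max\{p_1(\beta), p_1(\gamma)\}$. If $p_{1,\max} > p_{0,\max}$, then $H(m') < H(m)$, i.e. the transformation strictly reduces the zero-order (Shannon) entropy.
   Context: The generalized context transformation $GCT(\alpha\beta\leftrightarrow\alpha\gamma, m)$ exchanges all digrams $\alpha\beta$ for $\alpha\gamma$ and vice versa throughout the message $m$. When $\alpha \notin \{\beta,\gamma\}$, it is the message $m' = m'_1\cdots m'_n$ given by $m'_1 = m_1$ and, for $2 \le i \le n$: - $m'_i = \gamma$ if $m_{i-1} = \alpha$ and $m_i = \beta$; - $m'_i = \beta$ if $m_{i-1} = \alpha$ and $m_i = \gamma$; - $m'_i = m_i$ otherwise. For a message $w \in \Sigma^n$, its empirical symbol distribution is $p(x) = |\{i : w_i = x\}|/n$ for $x \in \Sigma$. Its zero-order (Shannon) entropy is $H(w) = -\sum_{x\in\Sigma} p(x)\log_2 p(x)$, with the convention $0\log_2 0 = 0$. *)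

theory Defs
  imports Complex_Main
begin

text \<open>Generalized context transformation GCT(ab <-> ac, m) on a message (list), 0-indexed:
  position 0 is kept; position i>0 is swapped b<->c iff the ORIGINAL previous symbol is a.\<close>
definition gct :: "'a \<Rightarrow> 'a \<Rightarrow> 'a \<Rightarrow> 'a list \<Rightarrow> 'a list" where
  "gct a b c m = map (\<lambda>i. if i = 0 then m ! 0
       else if m ! (i - 1) = a \<and> m ! i = b then c
       else if m ! (i - 1) = a \<and> m ! i = c then b
       else m ! i) [0..<length m]"

definition emp_dist :: "'a list \<Rightarrow> 'a \<Rightarrow> real" where
  "emp_dist w x = real (count_list w x) / real (length w)"

definition entropy0 :: "'a::finite list \<Rightarrow> real" where
  "entropy0 w = - (\<Sum>x\<in>(UNIV::'a set). (if emp_dist w x = 0 then 0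
                    else emp_dist w x * log 2 (emp_dist w x)))"

end

theory Submission
  imports Defs
begin

definition LL :: "real \<Rightarrow> real" where
  "LL y = (if y = 0 then 0 else y * ln y)"

lemma tangent:
  assumes "x > 0" "y \<ge> 0" "y \<noteq> x"
  shows "LL y > y * ln x + y - x"
proof (cases "y = 0")
  case True then show ?thesis using assms by (simp add: LL_def)
next
  case False
  then have y: "y > 0" using assms by simp
  have "ln x - ln y < (x - y) / y" using ln_diff_less[OF assms(1) y] assms by simp
  then have "y * (ln x - ln y) < x - y" using y by (simp add: field_simps)
  then show ?thesis using False by (simp add: LL_def algebra_simps)
qed

lemma core:
  assumes "s / 2 \<le> t" "t < u" "u \<le> s"
  shows "LL t + LL (s - t) < LL u + LL (s - u)"
proof -
  have t0: "t > 0" "s - t > 0" using assms by linarith+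
  have 1: "LL u > u * ln t + u - t" using tangent[OF t0(1), of u] assms by simp
  have 2: "LL (s - u) > (s - u) * ln (s - t) + (s - u) - (s - t)"
    using tangent[OF t0(2), of "s - u"] assms by simp
  have lt: "LL t = t * ln t" "LL (s - t) = (s - t) * ln (s - t)" using t0 by (auto simp: LL_def)
  have "ln (s - t) \<le> ln t" using t0 assms by simp
  then have 3: "(u - t) * ln (s - t) \<le> (u - t) * ln t" using assms
    by (intro mult_left_mono) auto
  show ?thesis using 1 2 3 lt by (simp add: algebra_simps)
qed

lemma core2:
  assumes "a \<ge> 0" "b \<ge> 0" "c \<ge> 0" "d \<ge> 0" "a + b = c + d" "max c d > max a b"
  shows "LL a + LL b < LL c + LL d"
proof -
  let ?s = "a + b" and ?t = "max a b" and ?u = "max c d"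
  have "LL ?t + LL (?s - ?t) < LL ?u + LL (?s - ?u)"
    by (rule core) (use assms in \<open>auto simp: max_def\<close>)
  moreover have "LL ?t + LL (?s - ?t) = LL a + LL b" by (auto simp: max_def)
  moreover have "LL ?u + LL (?s - ?u) = LL c + LL d" using assms(5) by (auto simp: max_def)
  ultimately show ?thesis by simp
qed

lemma G_LL: "(if p = 0 then 0 else p * log 2 p) = LL p / ln 2"
  by (simp add: LL_def log_def)

lemma gct_len: "length (gct a b c m) = length m"
  by (simp add: gct_def)

lemma gct_nth: "i < length m \<Longrightarrow> gct a b c m ! i = (if i = 0 then m ! 0
       else if m ! (i - 1) = a \<and> m ! i = b then c
       else if m ! (i - 1) = a \<and> m ! i = c then b
       else m ! i)"
  by (simp add: gct_def)

lemma count_card: "count_list xs x = card {i. i < length xs \<and> xs ! i = x}"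
  by (simp add: count_list_eq_length_filter length_filter_conv_card eq_commute)

lemma count_other:
  assumes "x \<noteq> b" "x \<noteq> c"
  shows "count_list (gct a b c m) x = count_list m x"
proof -
  have "{i. i < length (gct a b c m) \<and> gct a b c m ! i = x} = {i. i < length m \<and> m ! i = x}"
    using assms by (auto simp: gct_len gct_nth split: if_splits)
  then show ?thesis by (simp add: count_card)
qed

lemma count_bc:
  assumes "b \<noteq> c"
  shows "count_list (gct a b c m) b + count_list (gct a b c m) c = count_list m b + count_list m c"
proof -
  have gen: "count_list xs b + count_list xs c = card {i. i < length xs \<and> xs ! i \<in> {b, c}}" for xs :: "'a list"
  proof -
    have "{i. i < length xs \<and> xs ! i \<in> {b, c}} = {i. i < length xs \<and> xs ! i = b} \<union> {i. i < length xs \<and> xs ! i = c}"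
      by auto
    then show ?thesis using assms by (simp add: count_card card_Un_disjoint disjoint_iff)
  qed
  have "{i. i < length (gct a b c m) \<and> gct a b c m ! i \<in> {b, c}} = {i. i < length m \<and> m ! i \<in> {b, c}}"
    by (auto simp: gct_len gct_nth split: if_splits)
  then show ?thesis by (simp add: gen)
qed

lemma entropy_split:
  fixes w :: "'a::finite list"
  assumes "b \<noteq> c"
  shows "entropy0 w = - (LL (emp_dist w b) / ln 2 + LL (emp_dist w c) / ln 2
     + (\<Sum>x\<in>UNIV - {b, c}. LL (emp_dist w x) / ln 2))"
proof -
  have "(\<Sum>x\<in>(UNIV::'a set). LL (emp_dist w x) / ln 2) =
        (\<Sum>x\<in>{b, c}. LL (emp_dist w x) / ln 2) + (\<Sum>x\<in>UNIV - {b, c}. LL (emp_dist w x) / ln 2)"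
    by (metis add.commute finite subset_UNIV sum.subset_diff)
  then show ?thesis using assms by (simp add: entropy0_def G_LL)
qed

theorem theorem1:
  fixes m :: "'a::finite list" and \<alpha> \<beta> \<gamma> :: 'a
  assumes "length m \<ge> 2"
    and "\<alpha> \<noteq> \<beta>" and "\<alpha> \<noteq> \<gamma>" and "\<beta> \<noteq> \<gamma>"
    and "max (emp_dist (gct \<alpha> \<beta> \<gamma> m) \<beta>) (emp_dist (gct \<alpha> \<beta> \<gamma> m) \<gamma>)
         > max (emp_dist m \<beta>) (emp_dist m \<gamma>)"
  shows "entropy0 (gct \<alpha> \<beta> \<gamma> m) < entropy0 m"
proof -
  let ?m' = "gct \<alpha> \<beta> \<gamma> m"
  have rest: "(\<Sum>x\<in>UNIV - {\<beta>, \<gamma>}. LL (emp_dist ?m' x) / ln 2) = (\<Sum>x\<in>UNIV - {\<beta>, \<gamma>}. LL (emp_dist m x) / ln 2)"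
    by (rule sum.cong) (auto simp: emp_dist_def count_other gct_len)
  have sum: "emp_dist m \<beta> + emp_dist m \<gamma> = emp_dist ?m' \<beta> + emp_dist ?m' \<gamma>"
    using count_bc[OF assms(4), of \<alpha> m]
    by (simp add: emp_dist_def gct_len add_divide_distrib[symmetric] flip: of_nat_add)
  have "LL (emp_dist m \<beta>) + LL (emp_dist m \<gamma>) < LL (emp_dist ?m' \<beta>) + LL (emp_dist ?m' \<gamma>)"
    by (rule core2) (use sum assms(5) in \<open>auto simp: emp_dist_def\<close>)
  then have "LL (emp_dist m \<beta>) / ln 2 + LL (emp_dist m \<gamma>) / ln 2 < LL (emp_dist ?m' \<beta>) / ln 2 + LL (emp_dist ?m' \<gamma>) / ln 2"
    by (simp add: add_divide_distrib[symmetric] divide_strict_right_mono)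
  then show ?thesis using rest by (simp add: entropy_split[OF assms(4)])
qed

thm_deps theorem1

end
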